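(* For every fan $F$ there is a homomorphism $c:F\to T_7$ such that $c(r(F))=0$, $c(fl(F))\neq 0$ and $c(ll(F))\neq 0$.
   Context: $T_7$ is the tournament with vertex set $\{0,1,\dots,6\}$ in which $(i,j)$ is an arc if and only if $j-i\equiv 1,2,$ or $4 \pmod 7$. A homomorphism $c:F\to T_7$ of an oriented graph $F$ is a map on vertices such that $(c(u),c(v))$ is an arc of $T_7$ whenever $(u,v)$ is an arc of $F$. A fan $F$ is an oriented planar graph consisting of an oriented rooted plane tree (children of each vertex linearly ordered, as given by the planar embedding) with root $r=r(F)$, whose leaves (the vertices other than the root with no children), listed in left-to-right order, are $x_1,\dots,x_m$ ($m\ge 1$), together with, for each $1\le i\le m-1$, one arc between $x_i$ and $x_{i+1}$ (either $(x_i,x_{i+1})$ or $(x_{i+1},x_i)$). Write $fl(F)=x_1$ and $ll(F)=x_m$. *)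

theory Defs
  imports Main
begin

definition T7_arc :: "int \<Rightarrow> int \<Rightarrow> bool" where
  "T7_arc i j \<longleftrightarrow> i \<in> {0..6} \<and> j \<in> {0..6} \<and> (j - i) mod 7 \<in> {1, 2, 4}"

text \<open>A node carries the ordered list of its children;
  each child comes with a flag giving the orientation of the edge to it:
  True means the arc goes parent -> child, False means child -> parent.
  Vertices are identified with their positions (paths of child indices from the root);
  the root is the empty path.\<close>
datatype ptree = PNode "(bool \<times> ptree) list"

lemma ptree_zip_size:
  assumes "(i, b, t) \<in> set (zip xs cs)"
  shows "size t < Suc (size_list (size_prod (\<lambda>x. 0) size) cs)"
proof -
  from assms have "(b, t) \<in> set cs" by (meson set_zip_rightD)
  then have "size_prod (\<lambda>x. 0) size (b, t) \<le> size_list (size_prod (\<lambda>x. 0) size) cs"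
    by (rule size_list_estimation') simp
  then show ?thesis by simp
qed

function tarcs :: "ptree \<Rightarrow> (nat list \<times> nat list) set" where
  "tarcs (PNode cs) =
     (\<Union>(i, (b, t)) \<in> set (zip [0..<length cs] cs).
        {if b then ([], [i]) else ([i], [])} \<union> (\<lambda>(u, v). (i # u, i # v)) ` tarcs t)"
  by pat_completeness auto
termination by (relation "measure size") (auto dest: ptree_zip_size)

function leaves_below :: "ptree \<Rightarrow> nat list list" where
  "leaves_below (PNode cs) = (if cs = [] then [[]] else
     concat (map (\<lambda>(i, (b, t)). map (Cons i) (leaves_below t)) (zip [0..<length cs] cs)))"
  by pat_completeness auto
termination by (relation "measure size") (auto dest!: ptree_zip_size)

definition tree_leaves :: "ptree \<Rightarrow> nat list list" where
  "tree_leaves t = (case t of PNode [] \<Rightarrow> [] | _ \<Rightarrow> leaves_below t)"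

text \<open>A fan is given by a tree t and a list ds of orientations of the arcs between
  consecutive leaves: ds ! i = True means the arc (x_i, x_{i+1}), otherwise (x_{i+1}, x_i).\<close>
definition is_fan :: "ptree \<Rightarrow> bool list \<Rightarrow> bool" where
  "is_fan t ds \<longleftrightarrow> tree_leaves t \<noteq> [] \<and> length ds = length (tree_leaves t) - 1"

definition fan_arcs :: "ptree \<Rightarrow> bool list \<Rightarrow> (nat list \<times> nat list) set" where
  "fan_arcs t ds = tarcs t \<union>
     {if ds ! i then (tree_leaves t ! i, tree_leaves t ! Suc i)
      else (tree_leaves t ! Suc i, tree_leaves t ! i) | i. i < length ds}"

definition fan_root :: "nat list" where "fan_root = []"
definition fl :: "ptree \<Rightarrow> nat list" where "fl t = hd (tree_leaves t)"
definition ll :: "ptree \<Rightarrow> nat list" where "ll t = last (tree_leaves t)"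

definition is_hom_T7 :: "(nat list \<times> nat list) set \<Rightarrow> (nat list \<Rightarrow> int) \<Rightarrow> bool" where
  "is_hom_T7 A c \<longleftrightarrow> (\<forall>(u, v) \<in> A. T7_arc (c u) (c v))"

end

theory Submission
  imports Defs
begin

definition arcd :: "bool \<Rightarrow> int \<Rightarrow> int \<Rightarrow> bool" where
 "arcd e u v = (if e then T7_arc u v else T7_arc v u)"

definition parcs :: "nat list list \<Rightarrow> bool list \<Rightarrow> (nat list \<times> nat list) set" where
 "parcs xs ds = {if ds ! i then (xs ! i, xs ! Suc i) else (xs ! Suc i, xs ! i) | i. i < length ds}"

definition K :: "(bool \<times> ptree) list \<Rightarrow> nat list list" where
 "K cs = concat (map (\<lambda>(i, (b, t)). map (Cons i) (leaves_below t)) (zip [0..<length cs] cs))"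

lemma lb_ne: "leaves_below t \<noteq> []"
proof (induction t rule: leaves_below.induct)
  case (1 cs)
  show ?case
  proof (cases "cs = []")
    case True then show ?thesis by simp
  next
    case False
    then obtain b t where h: "hd cs = (b, t)" by (cases "hd cs") auto
    have c0: "cs ! 0 = (b, t)" using False h by (simp add: hd_conv_nth)
    have m: "(0, (b, t)) \<in> set (zip [0..<length cs] cs)"
      using False c0 by (force simp: set_zip)
    have "leaves_below t \<noteq> []" using 1 False m by blast
    have mm: "map (Cons 0) (leaves_below t) \<in> set (map (\<lambda>(i, (b, t)). map (Cons i) (leaves_below t)) (zip [0..<length cs] cs))"
      unfolding set_map using m by (rule rev_image_eqI) simp
    have eq: "leaves_below (PNode cs) = concat (map (\<lambda>(i, (b, t)). map (Cons i) (leaves_below t)) (zip [0..<length cs] cs))"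
      using False by simp
    show ?thesis unfolding eq concat_eq_Nil_conv using mm \<open>leaves_below t \<noteq> []\<close> by fastforce
  qed
qed

lemma K_snoc: "K (cs @ [(e, t)]) = K cs @ map (Cons (length cs)) (leaves_below t)"
  by (simp add: K_def)

lemma tarcs_snoc: "tarcs (PNode (cs @ [(e, t)])) = tarcs (PNode cs) \<union>
   ({if e then ([], [length cs]) else ([length cs], [])} \<union> (\<lambda>(u, v). (length cs # u, length cs # v)) ` tarcs t)"
  by auto

lemma tarcs_vert: "(u, v) \<in> tarcs (PNode cs) \<Longrightarrow> (u = [] \<or> hd u < length cs) \<and> (v = [] \<or> hd v < length cs)"
  by (auto simp: set_zip split: if_splits)

lemma K_vert: "u \<in> set (K cs) \<Longrightarrow> u \<noteq> [] \<and> hd u < length cs"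
  by (auto simp: K_def set_zip)

lemma parcs_sub: "(u, v) \<in> parcs xs ds \<Longrightarrow> length ds \<le> length xs - 1 \<Longrightarrow> u \<in> set xs \<and> v \<in> set xs"
proof -
  assume a: "(u, v) \<in> parcs xs ds" and l: "length ds \<le> length xs - 1"
  then obtain i where i: "i < length ds" and p: "(u, v) = (if ds ! i then (xs ! i, xs ! Suc i) else (xs ! Suc i, xs ! i))"
    unfolding parcs_def by blast
  have s: "Suc i < length xs" using i l by linarith
  then have "xs ! i \<in> set xs" "xs ! Suc i \<in> set xs" by simp_all
  then show ?thesis using p by (cases "ds ! i") auto
qed

lemma hom_cong: "is_hom_T7 A c \<Longrightarrow> (\<forall>(u, v)\<in>A. c' u = c u \<and> c' v = c v) \<Longrightarrow> is_hom_T7 A c'"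
  unfolding is_hom_T7_def by fastforce

lemma hom_union: "is_hom_T7 (A \<union> B) c \<longleftrightarrow> is_hom_T7 A c \<and> is_hom_T7 B c"
  by (auto simp: is_hom_T7_def)

lemma hom_mono: "is_hom_T7 B c \<Longrightarrow> A \<subseteq> B \<Longrightarrow> is_hom_T7 A c"
  by (auto simp: is_hom_T7_def)

lemma parcs_append:
  assumes "xs \<noteq> []" "ys \<noteq> []" "length ds1 = length xs - 1" "length ds2 = length ys - 1"
  shows "parcs (xs @ ys) (ds1 @ d # ds2) \<subseteq> parcs xs ds1 \<union> ({if d then (last xs, hd ys) else (hd ys, last xs)} \<union> parcs ys ds2)"
proof
  fix p assume "p \<in> parcs (xs @ ys) (ds1 @ d # ds2)"
  then obtain i where i: "i < length (ds1 @ d # ds2)"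
    and p: "p = (if (ds1 @ d # ds2) ! i then ((xs @ ys) ! i, (xs @ ys) ! Suc i) else ((xs @ ys) ! Suc i, (xs @ ys) ! i))"
    unfolding parcs_def by blast
  have lx: "length xs = Suc (length ds1)" using assms by (cases xs) auto
  consider "i < length ds1" | "i = length ds1" | "i > length ds1" by linarith
  then show "p \<in> parcs xs ds1 \<union> ({if d then (last xs, hd ys) else (hd ys, last xs)} \<union> parcs ys ds2)"
  proof cases
    case 1
    then have "p \<in> parcs xs ds1" unfolding parcs_def p using lx
      by (auto simp: nth_append intro!: exI[of _ i])
    then show ?thesis by blast
  next
    case 2
    have "xs ! length ds1 = last xs" using lx assms(1) by (simp add: last_conv_nth)
    moreover have "ys ! 0 = hd ys" using assms(2) by (simp add: hd_conv_nth)
    ultimately show ?thesis using 2 p lx by (auto simp: nth_append)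
  next
    case 3
    define j where "j = i - Suc (length ds1)"
    have ij: "i = Suc (length ds1) + j" using 3 j_def by simp
    have jl: "j < length ds2" using i ij by simp
    have "p \<in> parcs ys ds2" unfolding parcs_def p using lx ij jl
      by (auto simp: nth_append intro!: exI[of _ j])
    then show ?thesis by blast
  qed
qed

lemma parcs_map:
  assumes "is_hom_T7 (parcs ys ds) h" "\<forall>u. c (n # u) = h u" "length ds \<le> length ys - 1"
  shows "is_hom_T7 (parcs (map (Cons n) ys) ds) c"
proof -
  have "T7_arc (c p) (c q)" if pq: "(p, q) \<in> parcs (map (Cons n) ys) ds" for p q
  proof -
    obtain i where i: "i < length ds" and pq': "(p, q) = (if ds ! i then (map (Cons n) ys ! i, map (Cons n) ys ! Suc i)
         else (map (Cons n) ys ! Suc i, map (Cons n) ys ! i))" using pq unfolding parcs_def by blast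
    have s: "Suc i < length ys" using i assms(3) by linarith
    have mem: "(if ds ! i then (ys ! i, ys ! Suc i) else (ys ! Suc i, ys ! i)) \<in> parcs ys ds"
      unfolding parcs_def using i by blast
    show ?thesis
    proof (cases "ds ! i")
      case True
      then have "T7_arc (h (ys ! i)) (h (ys ! Suc i))" using mem assms(1) unfolding is_hom_T7_def by auto
      then show ?thesis using pq' True s assms(2) by simp
    next
      case False
      then have "T7_arc (h (ys ! Suc i)) (h (ys ! i))" using mem assms(1) unfolding is_hom_T7_def by auto
      then show ?thesis using pq' False s assms(2) by simp
    qed
  qed
  then show ?thesis unfolding is_hom_T7_def by auto
qed

lemma tarcs_img:
  assumes "is_hom_T7 (tarcs t) h" "\<forall>u. c (n # u) = h u"
  shows "is_hom_T7 ((\<lambda>(u, v). (n # u, n # v)) ` tarcs t) c"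
  using assms unfolding is_hom_T7_def by auto

lemma mult_qr: "x \<in> {1,2,4::int} \<Longrightarrow> \<alpha> \<in> {1,2,4::int} \<Longrightarrow> (\<alpha> * x) mod 7 \<in> {1,2,4}"
  by auto

lemma auto_arc:
  assumes "T7_arc u v" "\<alpha> \<in> {1,2,4}"
  shows "T7_arc ((y + \<alpha> * u) mod 7) ((y + \<alpha> * v) mod 7)"
proof -
  have "((y + \<alpha> * v) mod 7 - (y + \<alpha> * u) mod 7) mod 7 = ((y + \<alpha> * v) - (y + \<alpha> * u)) mod 7"
    by (simp add: mod_diff_eq)
  also have "\<dots> = (\<alpha> * (v - u)) mod 7" by (simp add: algebra_simps)
  also have "\<dots> = (\<alpha> * ((v - u) mod 7)) mod 7" by (simp add: mod_mult_right_eq)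
  finally have e: "((y + \<alpha> * v) mod 7 - (y + \<alpha> * u) mod 7) mod 7 = (\<alpha> * ((v - u) mod 7)) mod 7" .
  have "(v - u) mod 7 \<in> {1,2,4}" using assms(1) by (simp add: T7_arc_def)
  then have "(\<alpha> * ((v - u) mod 7)) mod 7 \<in> {1,2,4}" using assms(2) by (rule mult_qr)
  then have "((y + \<alpha> * v) mod 7 - (y + \<alpha> * u) mod 7) mod 7 \<in> {1,2,4}" by (simp only: e)
  moreover have "(y + \<alpha> * u) mod 7 \<in> {0..6}" by simp
  moreover have "(y + \<alpha> * v) mod 7 \<in> {0..6}" by simp
  ultimately show ?thesis unfolding T7_arc_def by blast
qed

lemma hom_affine: "is_hom_T7 A g \<Longrightarrow> \<alpha> \<in> {1,2,4} \<Longrightarrow> is_hom_T7 A (\<lambda>u. (y + \<alpha> * g u) mod 7)"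
  unfolding is_hom_T7_def by (auto intro: auto_arc)


lemma int16: "{1..6::int} = {1,2,3,4,5,6}" by auto

lemma fin_all: "\<forall>e\<in>{True,False}. \<forall>d\<in>{True,False}. \<forall>L\<in>{1,2,3,4,5,6::int}. \<forall>a\<in>{1,2,3,4,5,6::int}. \<forall>b\<in>{1,2,3,4,5,6::int}.
  \<exists>y\<in>{0,1,2,3,4,5,6::int}. \<exists>\<alpha>\<in>{1,2,4::int}. arcd e 0 y \<and> arcd d L ((y+\<alpha>*a) mod 7) \<and> (y+\<alpha>*b) mod 7 \<noteq> 0"
  by (simp add: arcd_def T7_arc_def)

lemma fin_leaf_all: "\<forall>e\<in>{True,False}. \<forall>d\<in>{True,False}. \<forall>L\<in>{1,2,3,4,5,6::int}.
  \<exists>y\<in>{0,1,2,3,4,5,6::int}. arcd e 0 y \<and> arcd d L y"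
  by (simp add: arcd_def T7_arc_def)

lemma fin:
  assumes "L \<in> {1..6}" "a \<in> {1..6}" "b \<in> {1..6}"
  shows "\<exists>y \<alpha>. y \<in> {0..6} \<and> \<alpha> \<in> {1,2,4} \<and> arcd e 0 y \<and> arcd d L ((y+\<alpha>*a) mod 7) \<and> (y+\<alpha>*b) mod 7 \<noteq> 0"
proof -
  have e: "e \<in> {True, False}" "d \<in> {True, False}" by auto
  obtain y \<alpha> where "y \<in> {0,1,2,3,4,5,6::int}" "\<alpha> \<in> {1,2,4::int}" "arcd e 0 y \<and> arcd d L ((y+\<alpha>*a) mod 7) \<and> (y+\<alpha>*b) mod 7 \<noteq> 0"
    using fin_all[rule_format, OF e(1) e(2) assms[unfolded int16]] by blast
  then show ?thesis by (intro exI[of _ y] exI[of _ \<alpha>]) auto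
qed

lemma fin_leaf:
  assumes "L \<in> {1..6}"
  shows "\<exists>y. y \<in> {0..6} \<and> arcd e 0 y \<and> arcd d L y"
proof -
  have e: "e \<in> {True, False}" "d \<in> {True, False}" by auto
  obtain y where "y \<in> {0,1,2,3,4,5,6::int}" "arcd e 0 y \<and> arcd d L y"
    using fin_leaf_all[rule_format, OF e(1) e(2) assms[unfolded int16]] by blast
  then show ?thesis by (intro exI[of _ y]) auto
qed

definition good :: "ptree \<Rightarrow> bool" where
 "good t \<longleftrightarrow> (\<forall>ds. (\<exists>cs. t = PNode cs \<and> cs \<noteq> []) \<longrightarrow> length ds = length (leaves_below t) - 1 \<longrightarrow>
    (\<exists>c. is_hom_T7 (tarcs t \<union> parcs (leaves_below t) ds) c \<and> c [] = 0 \<and> (\<forall>u. c u \<in> {0..6}) \<and>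
         c (hd (leaves_below t)) \<noteq> 0 \<and> c (last (leaves_below t)) \<noteq> 0))"

lemma arcd_ne: "arcd e u v \<Longrightarrow> u \<noteq> v"
  by (auto simp: arcd_def T7_arc_def)

lemma child:
  assumes g: "good t" and L: "L \<in> {1..6}" and ld: "length ds = length (leaves_below t) - 1"
  shows "\<exists>h. is_hom_T7 (tarcs t \<union> parcs (leaves_below t) ds) h \<and> arcd e 0 (h []) \<and>
     arcd d L (h (hd (leaves_below t))) \<and> h (last (leaves_below t)) \<noteq> 0 \<and> (\<forall>u. h u \<in> {0..6})"
proof (cases t)
  case (PNode cs)
  show ?thesis
  proof (cases "cs = []")
    case True
    obtain y where y: "y \<in> {0..6}" "arcd e 0 y" "arcd d L y" using fin_leaf[OF L] by blast
    have lb: "leaves_below t = [[]]" using PNode True by simp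
    have ta: "tarcs t = {}" using PNode True by simp
    have pa: "parcs [[]] ds = {}" using ld lb by (simp add: parcs_def)
    have y0: "y \<noteq> 0" using arcd_ne[OF y(2)] by simp
    show ?thesis
      by (rule exI[of _ "\<lambda>_. y"]) (use y y0 in \<open>simp add: lb ta pa is_hom_T7_def\<close>)
  next
    case False
    obtain c where c: "is_hom_T7 (tarcs t \<union> parcs (leaves_below t) ds) c" "c [] = 0" "\<forall>u. c u \<in> {0..6}"
        "c (hd (leaves_below t)) \<noteq> 0" "c (last (leaves_below t)) \<noteq> 0"
      using g ld PNode False unfolding good_def by blast
    define a where "a = c (hd (leaves_below t))"
    define b where "b = c (last (leaves_below t))"
    have a0: "a \<in> {0..6}" "b \<in> {0..6}" using c(3) unfolding a_def b_def by blast+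
    have ab: "a \<in> {1..6}" "b \<in> {1..6}" using a0 c(4,5) unfolding a_def b_def by auto
    obtain y \<alpha> where ya: "y \<in> {0..6}" "\<alpha> \<in> {1,2,4}" "arcd e 0 y" "arcd d L ((y+\<alpha>*a) mod 7)" "(y+\<alpha>*b) mod 7 \<noteq> 0"
      using fin[OF L ab] by blast
    define h where "h = (\<lambda>u. (y + \<alpha> * c u) mod 7)"
    have h1: "is_hom_T7 (tarcs t \<union> parcs (leaves_below t) ds) h" unfolding h_def by (rule hom_affine[OF c(1) ya(2)])
    have h2: "h [] = y" using ya(1) c(2) by (auto simp: h_def intro: mod_pos_pos_trivial)
    have m7: "\<And>z::int. z mod 7 \<in> {0..6}" by simp
    have h3: "\<forall>u. h u \<in> {0..6}" unfolding h_def using m7 by blast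
    show ?thesis
      apply (rule exI[of _ h])
      using h1 h2 h3 ya unfolding a_def b_def h_def by simp
  qed
qed

lemma K_ne: "cs \<noteq> [] \<Longrightarrow> K cs \<noteq> []"
proof (induction cs rule: rev_induct)
  case (snoc x xs)
  obtain e t where "x = (e, t)" by (cases x)
  then show ?case using lb_ne[of t] by (simp add: K_snoc)
qed simp

lemma children:
  assumes "\<forall>x\<in>set cs. good (snd x)"
  shows "\<forall>ds. length ds = length (K cs) - 1 \<longrightarrow> (\<exists>c. is_hom_T7 (tarcs (PNode cs) \<union> parcs (K cs) ds) c \<and> c [] = 0 \<and>
     (\<forall>u. c u \<in> {0..6}) \<and> (cs \<noteq> [] \<longrightarrow> c (hd (K cs)) \<noteq> 0 \<and> c (last (K cs)) \<noteq> 0))"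
  using assms
proof (induction cs rule: rev_induct)
  case Nil
  show ?case
  proof (intro allI impI)
    fix ds :: "bool list" assume "length ds = length (K []) - 1"
    then have "ds = []" by (simp add: K_def)
    then show "\<exists>c. is_hom_T7 (tarcs (PNode []) \<union> parcs (K []) ds) c \<and> c [] = 0 \<and>
     (\<forall>u. c u \<in> {0..6}) \<and> ([] \<noteq> [] \<longrightarrow> c (hd (K [])) \<noteq> 0 \<and> c (last (K [])) \<noteq> 0)"
      by (intro exI[of _ "\<lambda>_. 0"]) (simp add: parcs_def is_hom_T7_def K_def)
  qed
next
  case (snoc x cs)
  obtain e t where x: "x = (e, t)" by (cases x)
  have gt: "good t" using snoc.prems x by simp
  have IH: "\<forall>ds. length ds = length (K cs) - 1 \<longrightarrow> (\<exists>c. is_hom_T7 (tarcs (PNode cs) \<union> parcs (K cs) ds) c \<and> c [] = 0 \<and>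
     (\<forall>u. c u \<in> {0..6}) \<and> (cs \<noteq> [] \<longrightarrow> c (hd (K cs)) \<noteq> 0 \<and> c (last (K cs)) \<noteq> 0))"
    using snoc.IH snoc.prems by simp
  define n where "n = length cs"
  define lt where "lt = leaves_below t"
  have ltne: "lt \<noteq> []" unfolding lt_def by (rule lb_ne)
  have Kx: "K (cs @ [x]) = K cs @ map (Cons n) lt" using x by (simp add: K_snoc n_def lt_def)
  have Tx: "tarcs (PNode (cs @ [x])) = tarcs (PNode cs) \<union>
   ({if e then ([], [n]) else ([n], [])} \<union> (\<lambda>(u, v). (n # u, n # v)) ` tarcs t)"
    using x tarcs_snoc n_def by simp
  have glue: "is_hom_T7 (tarcs (PNode (cs @ [x])) \<union> parcs (map (Cons n) lt) ds2) c'
      \<and> c' [] = 0 \<and> (\<forall>u. c' u \<in> {0..6}) \<and> (\<forall>u\<in>set (K cs). c' u = c u) \<and> (\<forall>u. c' (n # u) = h u)"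
    if c: "is_hom_T7 (tarcs (PNode cs)) c" "c [] = 0" "\<forall>u. c u \<in> {0..6}"
    and h: "is_hom_T7 (tarcs t \<union> parcs lt ds2) h" "arcd e 0 (h [])" "\<forall>u. h u \<in> {0..6}"
    and ld2: "length ds2 = length lt - 1"
    and c'_def: "c' = (\<lambda>u. if u \<noteq> [] \<and> hd u = n then h (tl u) else c u)"
    for c h c' ds2
  proof -
    have F1: "\<forall>u. c' (n # u) = h u" by (simp add: c'_def)
    have F3: "\<forall>u\<in>set (K cs). c' u = c u"
    proof
      fix u assume u: "u \<in> set (K cs)"
      have "u \<noteq> [] \<and> hd u < n" using K_vert[OF u] unfolding n_def .
      then show "c' u = c u" unfolding c'_def by simp
    qed
    have F4: "is_hom_T7 (tarcs (PNode cs)) c'"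
    proof (rule hom_cong[OF c(1)])
      have "c' u = c u \<and> c' v = c v" if uv: "(u, v) \<in> tarcs (PNode cs)" for u v
      proof -
        have "(u = [] \<or> hd u < n) \<and> (v = [] \<or> hd v < n)" using tarcs_vert[OF uv] unfolding n_def .
        then show ?thesis unfolding c'_def by auto
      qed
      then show "\<forall>(u, v)\<in>tarcs (PNode cs). c' u = c u \<and> c' v = c v" by blast
    qed
    have F5: "is_hom_T7 {if e then ([], [n]) else ([n], [])} c'"
      using h(2) c(2) by (auto simp: is_hom_T7_def c'_def arcd_def)
    have ht: "is_hom_T7 (tarcs t) h" "is_hom_T7 (parcs lt ds2) h" using h(1) hom_union by blast+
    have F6: "is_hom_T7 ((\<lambda>(u, v). (n # u, n # v)) ` tarcs t) c'" by (rule tarcs_img[OF ht(1) F1])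
    have F7: "is_hom_T7 (parcs (map (Cons n) lt) ds2) c'" by (rule parcs_map[OF ht(2) F1]) (simp add: ld2)
    have F8: "\<forall>u. c' u \<in> {0..6}" using c(3) h(3) by (simp add: c'_def)
    show ?thesis using F1 F3 F4 F5 F6 F7 F8 c(2) unfolding Tx hom_union by (simp add: c'_def)
  qed
  show ?case
  proof (intro allI impI)
    fix ds :: "bool list" assume ld: "length ds = length (K (cs @ [x])) - 1"
    show "\<exists>c. is_hom_T7 (tarcs (PNode (cs @ [x])) \<union> parcs (K (cs @ [x])) ds) c \<and> c [] = 0 \<and>
     (\<forall>u. c u \<in> {0..6}) \<and> (cs @ [x] \<noteq> [] \<longrightarrow> c (hd (K (cs @ [x]))) \<noteq> 0 \<and> c (last (K (cs @ [x]))) \<noteq> 0)"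
    proof (cases "cs = []")
      case True
      have K0: "K cs = []" using True by (simp add: K_def)
      have ld2: "length ds = length lt - 1" using ld Kx K0 by simp
      obtain h where h: "is_hom_T7 (tarcs t \<union> parcs lt ds) h" "arcd e 0 (h [])" "arcd True 1 (h (hd lt))"
          "h (last lt) \<noteq> 0" "\<forall>u. h u \<in> {0..6}"
        using child[OF gt _ ld2[unfolded lt_def], of 1 e True] unfolding lt_def by auto
      define c' where "c' = (\<lambda>u. if u \<noteq> [] \<and> hd u = n then h (tl u) else (\<lambda>_. 0::int) u)"
      have T0: "is_hom_T7 (tarcs (PNode cs)) (\<lambda>_. 0)" using True by (simp add: is_hom_T7_def)
      have G: "is_hom_T7 (tarcs (PNode (cs @ [x])) \<union> parcs (map (Cons n) lt) ds) c'
      \<and> c' [] = 0 \<and> (\<forall>u. c' u \<in> {0..6}) \<and> (\<forall>u. c' (n # u) = h u)"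
        using glue[OF T0 _ _ h(1,2,5) ld2 c'_def] by simp
      have hd0: "h (hd lt) \<noteq> 0" using h(3) by (auto simp: arcd_def T7_arc_def)
      show ?thesis
        apply (rule exI[of _ c'])
        using G hd0 h(4) ltne unfolding Kx K0 by (simp add: hd_map last_map)
    next
      case False
      have Kne: "K cs \<noteq> []" using K_ne[OF False] .
      define k where "k = length (K cs) - 1"
      have kl: "Suc k = length (K cs)" using Kne unfolding k_def by (cases "K cs") auto
      have lds: "length ds = length (K cs) + length lt - 1" using ld Kx by simp
      have klt: "k < length ds" using lds kl ltne by (cases lt) auto
      define ds1 where "ds1 = take k ds"
      define d where "d = ds ! k"
      define ds2 where "ds2 = drop (Suc k) ds"
      have dsq: "ds = ds1 @ d # ds2" unfolding ds1_def d_def ds2_def using id_take_nth_drop[OF klt] .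
      have l1: "length ds1 = length (K cs) - 1" using klt unfolding ds1_def k_def by simp
      have l2: "length ds2 = length lt - 1" using lds kl unfolding ds2_def by simp
      obtain c where c: "is_hom_T7 (tarcs (PNode cs) \<union> parcs (K cs) ds1) c" "c [] = 0"
          "\<forall>u. c u \<in> {0..6}" "c (hd (K cs)) \<noteq> 0" "c (last (K cs)) \<noteq> 0"
        using IH l1 False by blast
      define L where "L = c (last (K cs))"
      have L: "L \<in> {1..6}" using c(3,5) unfolding L_def by (metis atLeastAtMost_iff int_one_le_iff_zero_less order_le_less)
      obtain h where h: "is_hom_T7 (tarcs t \<union> parcs lt ds2) h" "arcd e 0 (h [])" "arcd d L (h (hd lt))"
          "h (last lt) \<noteq> 0" "\<forall>u. h u \<in> {0..6}"
        using child[OF gt L l2[unfolded lt_def], of e d] unfolding lt_def by auto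
      define c' where "c' = (\<lambda>u. if u \<noteq> [] \<and> hd u = n then h (tl u) else c u)"
      have cc: "is_hom_T7 (tarcs (PNode cs)) c" "is_hom_T7 (parcs (K cs) ds1) c" using c(1) hom_union by blast+
      have G: "is_hom_T7 (tarcs (PNode (cs @ [x])) \<union> parcs (map (Cons n) lt) ds2) c'
      \<and> c' [] = 0 \<and> (\<forall>u. c' u \<in> {0..6}) \<and> (\<forall>u\<in>set (K cs). c' u = c u) \<and> (\<forall>u. c' (n # u) = h u)"
        using glue[OF cc(1) c(2,3) h(1,2,5) l2 c'_def] .
      have agree: "\<forall>u\<in>set (K cs). c' u = c u" using G by blast
      have P1: "is_hom_T7 (parcs (K cs) ds1) c'"
      proof (rule hom_cong[OF cc(2)])
        have "c' u = c u \<and> c' v = c v" if uv: "(u, v) \<in> parcs (K cs) ds1" for u v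
        proof -
          have "u \<in> set (K cs) \<and> v \<in> set (K cs)" using parcs_sub[OF uv] l1 by simp
          then show ?thesis using agree by simp
        qed
        then show "\<forall>(u, v)\<in>parcs (K cs) ds1. c' u = c u \<and> c' v = c v" by blast
      qed
      have lastK: "last (K cs) \<in> set (K cs)" using Kne by simp
      have c'L: "c' (last (K cs)) = L" using agree lastK unfolding L_def by blast
      have c'H: "c' (hd (K cs)) = c (hd (K cs))" using agree Kne by simp
      have hdm: "hd (map (Cons n) lt) = n # hd lt" using ltne by (simp add: hd_map)
      have lastm: "last (map (Cons n) lt) = n # last lt" using ltne by (simp add: last_map)
      have P2: "is_hom_T7 {if d then (last (K cs), hd (map (Cons n) lt)) else (hd (map (Cons n) lt), last (K cs))} c'"
        using h(3) G c'L unfolding hdm by (auto simp: is_hom_T7_def arcd_def)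
      have sub: "parcs (K cs @ map (Cons n) lt) ds \<subseteq> parcs (K cs) ds1 \<union>
          ({if d then (last (K cs), hd (map (Cons n) lt)) else (hd (map (Cons n) lt), last (K cs))} \<union> parcs (map (Cons n) lt) ds2)"
        unfolding dsq by (rule parcs_append) (use Kne ltne l1 l2 in simp_all)
      have P: "is_hom_T7 (parcs (K cs @ map (Cons n) lt) ds) c'"
      proof (rule hom_mono[OF _ sub])
        have P3: "is_hom_T7 (parcs (map (Cons n) lt) ds2) c'" using G hom_union by blast
        show "is_hom_T7 (parcs (K cs) ds1 \<union> ({if d then (last (K cs), hd (map (Cons n) lt)) else (hd (map (Cons n) lt), last (K cs))} \<union> parcs (map (Cons n) lt) ds2)) c'"
          unfolding hom_union using P1 P2 P3 by blast
      qed
      show ?thesis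
        apply (rule exI[of _ c'])
        using G P c'H c(4) h(4) lastm ltne Kne unfolding Kx hom_union by simp
    qed
  qed
qed

lemma good_all: "good t"
proof (induction t rule: leaves_below.induct)
  case (1 cs)
  show ?case
  proof (cases "cs = []")
    case True
    then show ?thesis by (simp add: good_def)
  next
    case False
    have allg: "\<forall>x\<in>set cs. good (snd x)"
    proof
      fix x assume "x \<in> set cs"
      then obtain i where i: "i < length cs" "cs ! i = x" by (auto simp: in_set_conv_nth)
      obtain b t where x: "x = (b, t)" by (cases x)
      have m: "(i, (b, t)) \<in> set (zip [0..<length cs] cs)" using i x by (force simp: set_zip)
      show "good (snd x)" using 1 False m x by auto
    qed
    have lbK: "leaves_below (PNode cs) = K cs" using False by (simp add: K_def)
    show ?thesis
      unfolding good_def lbK using children[OF allg] False by auto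
  qed
qed

theorem lemma4:
  assumes "is_fan t ds"
  shows "\<exists>c. is_hom_T7 (fan_arcs t ds) c \<and> c fan_root = 0 \<and> c (fl t) \<noteq> 0 \<and> c (ll t) \<noteq> 0"
proof -
  obtain cs where t: "t = PNode cs" by (cases t)
  have tl: "tree_leaves t \<noteq> []" "length ds = length (tree_leaves t) - 1" using assms by (auto simp: is_fan_def)
  have cs: "cs \<noteq> []" using tl(1) t by (auto simp: tree_leaves_def)
  have tle: "tree_leaves t = leaves_below t" using t cs by (cases cs) (auto simp: tree_leaves_def)
  have fa: "fan_arcs t ds = tarcs t \<union> parcs (tree_leaves t) ds" by (simp add: fan_arcs_def parcs_def)
  obtain c where c: "is_hom_T7 (tarcs t \<union> parcs (leaves_below t) ds) c" "c [] = 0"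
      "c (hd (leaves_below t)) \<noteq> 0" "c (last (leaves_below t)) \<noteq> 0"
    using good_all[of t] t cs tl(2)[unfolded tle] unfolding good_def by blast
  show ?thesis
    using c unfolding fa tle fl_def ll_def fan_root_def by blast
qed

end
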